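(* For every integer $n\ge 4$, $px_{n-1,2}(K_n)=2$.
   Context: All graphs are finite, simple and undirected. An edge-coloring of a graph may assign the same color to adjacent edges. A tree $T$ in an edge-colored graph is a proper tree if no two adjacent edges of $T$ receive the same color. For $S\subseteq V(G)$ with $|S|\ge 2$, an $S$-tree is a tree in $G$ containing all vertices of $S$. $S$-trees $T_1,\dots,T_\ell$ are internally disjoint if $E(T_i)\cap E(T_j)=\emptyset$ and $V(T_i)\cap V(T_j)=S$ for all $i\ne j$. For a connected graph $G$ of order $n$ and integers $k,\ell$ with $2\le k\le n$ and $1\le \ell\le \kappa_k(G)$ (where $\kappa_k(G)$ is the minimum, over all $k$-subsets $S$ of $V(G)$, of the maximum number of internally disjoint $S$-trees), the $(k,\ell)$-proper index $px_{k,\ell}(G)$ is the minimum number of colors in an edge-coloring of $G$ such that for every $k$-subset $S$ of $V(G)$ there exist $\ell$ internally disjoint proper $S$-trees. *)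

theory Defs
  imports Main
begin

text \<open>A graph is given by a vertex set V and an edge set E of 2-element vertex sets.
  Edge-colorings are functions from edges to natural numbers (colors).\<close>

definition adj_rel :: "'a set set \<Rightarrow> ('a \<times> 'a) set" where
  "adj_rel ET = {(x, y). {x, y} \<in> ET}"

definition has_cycle :: "'a set set \<Rightarrow> bool" where
  "has_cycle ET \<longleftrightarrow> (\<exists>cs. length cs \<ge> 3 \<and> distinct cs \<and>
      (\<forall>i < length cs. {cs ! i, cs ! ((i + 1) mod length cs)} \<in> ET))"

definition is_tree_in :: "'a set \<Rightarrow> 'a set set \<Rightarrow> 'a set \<Rightarrow> 'a set set \<Rightarrow> bool" where
  "is_tree_in V E VT ET \<longleftrightarrow> VT \<subseteq> V \<and> ET \<subseteq> E \<and> (\<forall>e\<in>ET. e \<subseteq> VT) \<and> VT \<noteq> {} \<and>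
     (\<forall>u\<in>VT. \<forall>v\<in>VT. (u, v) \<in> (adj_rel ET)\<^sup>*) \<and> \<not> has_cycle ET"

definition is_S_tree :: "'a set \<Rightarrow> 'a set set \<Rightarrow> 'a set \<Rightarrow> 'a set \<Rightarrow> 'a set set \<Rightarrow> bool" where
  "is_S_tree V E S VT ET \<longleftrightarrow> is_tree_in V E VT ET \<and> S \<subseteq> VT"

definition proper_tree :: "('a set \<Rightarrow> nat) \<Rightarrow> 'a set set \<Rightarrow> bool" where
  "proper_tree c ET \<longleftrightarrow> (\<forall>e1\<in>ET. \<forall>e2\<in>ET. e1 \<noteq> e2 \<and> e1 \<inter> e2 \<noteq> {} \<longrightarrow> c e1 \<noteq> c e2)"

definition int_disj_S_trees ::
  "'a set \<Rightarrow> 'a set set \<Rightarrow> 'a set \<Rightarrow> nat \<Rightarrow> (nat \<Rightarrow> 'a set \<times> 'a set set) \<Rightarrow> bool" where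
  "int_disj_S_trees V E S l T \<longleftrightarrow>
     (\<forall>i<l. is_S_tree V E S (fst (T i)) (snd (T i))) \<and>
     (\<forall>i<l. \<forall>j<l. i \<noteq> j \<longrightarrow> snd (T i) \<inter> snd (T j) = {} \<and> fst (T i) \<inter> fst (T j) = S)"

definition kappa :: "'a set \<Rightarrow> 'a set set \<Rightarrow> nat \<Rightarrow> nat" where
  "kappa V E k = Min {Max {l. \<exists>T. int_disj_S_trees V E S l T} | S. S \<subseteq> V \<and> card S = k}"

definition px :: "'a set \<Rightarrow> 'a set set \<Rightarrow> nat \<Rightarrow> nat \<Rightarrow> nat" where
  "px V E k l = (if 2 \<le> k \<and> k \<le> card V \<and> 1 \<le> l \<and> l \<le> kappa V E k then
     (LEAST m. \<exists>c :: 'a set \<Rightarrow> nat. c ` E \<subseteq> {..<m} \<and>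
        (\<forall>S. S \<subseteq> V \<and> card S = k \<longrightarrow>
           (\<exists>T. int_disj_S_trees V E S l T \<and> (\<forall>i<l. proper_tree c (snd (T i))))))
   else undefined)"

definition complete_V :: "nat \<Rightarrow> nat set" where
  "complete_V n = {..<n}"

definition complete_E :: "nat \<Rightarrow> nat set set" where
  "complete_E n = {{u, v} | u v. u < n \<and> v < n \<and> u \<noteq> v}"

end

theory Submission
  imports Defs
begin

definition PE :: "(nat \<Rightarrow> 'a) \<Rightarrow> nat \<Rightarrow> 'a set set" where
  "PE f L = {{f i, f (Suc i)} | i. Suc i < L}"

lemma PE_mem: "Suc i < L \<Longrightarrow> {f i, f (Suc i)} \<in> PE f L"
  unfolding PE_def by blast

lemma path_reach:
  assumes "i < L"
  shows "(f 0, f i) \<in> (adj_rel (PE f L))\<^sup>* \<and> (f i, f 0) \<in> (adj_rel (PE f L))\<^sup>*"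
  using assms
proof (induction i)
  case 0 then show ?case by simp
next
  case (Suc i)
  have e: "{f i, f (Suc i)} \<in> PE f L" using Suc.prems by (rule PE_mem)
  have 1: "(f i, f (Suc i)) \<in> adj_rel (PE f L)" using e unfolding adj_rel_def by simp
  have 2: "(f (Suc i), f i) \<in> adj_rel (PE f L)" using e unfolding adj_rel_def by (simp add: insert_commute)
  from Suc have IH: "(f 0, f i) \<in> (adj_rel (PE f L))\<^sup>* \<and> (f i, f 0) \<in> (adj_rel (PE f L))\<^sup>*" by simp
  show ?case using IH 1 2
    by (meson converse_rtrancl_into_rtrancl rtrancl.rtrancl_into_rtrancl)
qed

lemma PE_nbr:
  assumes inj: "inj_on f {..<L}" and J: "J < L" and y: "{f J, y} \<in> PE f L"
    and mx: "Suc J < L \<Longrightarrow> y = f (Suc J) \<Longrightarrow> False"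
  shows "J \<ge> 1 \<and> y = f (J - 1)"
proof -
  from y obtain i where i: "{f J, y} = {f i, f (Suc i)}" "Suc i < L" unfolding PE_def by blast
  from i(1) have "(f J = f i \<and> y = f (Suc i)) \<or> (f J = f (Suc i) \<and> y = f i)"
    by (auto simp: doubleton_eq_iff)
  then show ?thesis
  proof
    assume h: "f J = f i \<and> y = f (Suc i)"
    then have "J = i" using inj J i(2) by (auto dest: inj_onD)
    then show ?thesis using h mx i(2) by auto
  next
    assume h: "f J = f (Suc i) \<and> y = f i"
    then have "J = Suc i" using inj J i(2) by (auto dest: inj_onD)
    then show ?thesis using h by auto
  qed
qed

lemma path_acyclic:
  assumes inj: "inj_on f {..<L}"
  shows "\<not> has_cycle (PE f L)"
proof
  assume "has_cycle (PE f L)"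
  then obtain cs where len: "length cs \<ge> 3" and dist: "distinct cs"
    and cyc: "\<forall>i < length cs. {cs ! i, cs ! ((i + 1) mod length cs)} \<in> PE f L"
    unfolding has_cycle_def by blast
  define N where "N = length cs"
  have inPE: "\<And>x. x \<in> set cs \<Longrightarrow> \<exists>j<L. x = f j"
  proof -
    fix x assume "x \<in> set cs"
    then obtain i where i: "i < N" "x = cs ! i" unfolding N_def by (auto simp: in_set_conv_nth)
    then have "{cs ! i, cs ! ((i + 1) mod N)} \<in> PE f L" using cyc N_def by auto
    then obtain j where "{cs ! i, cs ! ((i + 1) mod N)} = {f j, f (Suc j)}" "Suc j < L"
      unfolding PE_def by blast
    then show "\<exists>j<L. x = f j" using i by (auto simp: doubleton_eq_iff intro: Suc_lessD)
  qed
  define Js where "Js = {j. j < L \<and> f j \<in> set cs}"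
  have fin: "finite Js" unfolding Js_def by auto
  have ne: "Js \<noteq> {}"
  proof -
    have c0: "cs ! 0 \<in> set cs" using len by (intro nth_mem) auto
    then obtain j where "j < L" "cs ! 0 = f j" using inPE by blast
    then show ?thesis unfolding Js_def using c0 by auto
  qed
  define J where "J = Max Js"
  have JJs: "J \<in> Js" unfolding J_def using fin ne by simp
  have Jmax: "\<And>j. j \<in> Js \<Longrightarrow> j \<le> J" unfolding J_def using fin by simp
  have JL: "J < L" and fJ: "f J \<in> set cs" using JJs unfolding Js_def by auto
  obtain k where k: "k < N" "cs ! k = f J" using fJ unfolding N_def by (auto simp: in_set_conv_nth)
  have mx: "\<And>y. y \<in> set cs \<Longrightarrow> Suc J < L \<Longrightarrow> y = f (Suc J) \<Longrightarrow> False"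
  proof -
    fix y assume "y \<in> set cs" "Suc J < L" "y = f (Suc J)"
    then have "Suc J \<in> Js" unfolding Js_def by auto
    then show False using Jmax by fastforce
  qed
  define ka where "ka = (if k + 1 < N then k + 1 else 0)"
  define kb where "kb = (if k = 0 then N - 1 else k - 1)"
  have N3: "N \<ge> 3" using len N_def by simp
  have ka_eq: "(k + 1) mod N = ka"
  proof (cases "k + 1 < N")
    case False then have "k + 1 = N" using k(1) by simp
    then show ?thesis unfolding ka_def by simp
  qed (simp add: ka_def)
  have kb_eq: "(kb + 1) mod N = k" unfolding kb_def using k(1) N3 by auto
  have kaN: "ka < N" and kbN: "kb < N" unfolding ka_def kb_def using k(1) N3 by auto
  have kab: "ka \<noteq> kb" unfolding ka_def kb_def using k(1) N3 by auto
  have ea: "{f J, cs ! ka} \<in> PE f L" using cyc k ka_eq N_def by metis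
  have eb0: "{cs ! kb, f J} \<in> PE f L" using cyc kbN kb_eq k(2) N_def by metis
  have eb: "{f J, cs ! kb} \<in> PE f L" using eb0 by (simp add: insert_commute)
  have a: "cs ! ka = f (J - 1)"
    using PE_nbr[OF inj JL ea] mx kaN N_def by (meson nth_mem)
  have b: "cs ! kb = f (J - 1)"
    using PE_nbr[OF inj JL eb] mx kbN N_def by (meson nth_mem)
  have "cs ! ka \<noteq> cs ! kb" using dist kaN kbN kab N_def by (simp add: nth_eq_iff_index_eq)
  then show False using a b by simp
qed

lemma path_tree:
  assumes inj: "inj_on f {..<L}" and L: "L \<ge> 1" and img: "f ` {..<L} \<subseteq> V"
    and edg: "\<And>i. Suc i < L \<Longrightarrow> {f i, f (Suc i)} \<in> E"
  shows "is_tree_in V E (f ` {..<L}) (PE f L)"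
  unfolding is_tree_in_def
proof (intro conjI)
  show "f ` {..<L} \<subseteq> V" by (rule img)
  show "PE f L \<subseteq> E" using edg unfolding PE_def by blast
  show "\<forall>e\<in>PE f L. e \<subseteq> f ` {..<L}" unfolding PE_def by auto
  show "f ` {..<L} \<noteq> {}" using L by (simp add: lessThan_empty_iff)
  show "\<not> has_cycle (PE f L)" by (rule path_acyclic[OF inj])
  show "\<forall>u\<in>f ` {..<L}. \<forall>v\<in>f ` {..<L}. (u, v) \<in> (adj_rel (PE f L))\<^sup>*"
  proof (intro ballI)
    fix u v assume "u \<in> f ` {..<L}" "v \<in> f ` {..<L}"
    then obtain i j where "i < L" "j < L" "u = f i" "v = f j" by auto
    then show "(u, v) \<in> (adj_rel (PE f L))\<^sup>*"
      using path_reach[of i L f] path_reach[of j L f] by (meson rtrancl_trans)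
  qed
qed

lemma path_proper:
  assumes inj: "inj_on f {..<L}"
    and alt: "\<And>i. Suc (Suc i) < L \<Longrightarrow> c {f i, f (Suc i)} \<noteq> c {f (Suc i), f (Suc (Suc i))}"
  shows "proper_tree c (PE f L)"
  unfolding proper_tree_def
proof (intro ballI impI)
  fix e1 e2 assume e1: "e1 \<in> PE f L" and e2: "e2 \<in> PE f L" and h: "e1 \<noteq> e2 \<and> e1 \<inter> e2 \<noteq> {}"
  from e1 obtain i where i: "e1 = {f i, f (Suc i)}" "Suc i < L" unfolding PE_def by blast
  from e2 obtain j where j: "e2 = {f j, f (Suc j)}" "Suc j < L" unfolding PE_def by blast
  have eq: "\<And>a b. a < L \<Longrightarrow> b < L \<Longrightarrow> f a = f b \<Longrightarrow> a = b" using inj by (auto dest: inj_onD)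
  from h i j have "f i = f j \<or> f i = f (Suc j) \<or> f (Suc i) = f j \<or> f (Suc i) = f (Suc j)" by auto
  then have "i = j \<or> i = Suc j \<or> Suc i = j"
    using eq i(2) j(2) by (metis Suc_lessD Suc_inject)
  moreover have "i \<noteq> j" using h i j by auto
  ultimately have "i = Suc j \<or> j = Suc i" by auto
  then show "c e1 \<noteq> c e2"
  proof
    assume "i = Suc j" then show ?thesis using alt[of j] i j by auto
  next
    assume "j = Suc i" then show ?thesis using alt[of i] i j by auto
  qed
qed

lemma modinj: assumes "(a + x) mod (m::nat) = (b + x) mod m" "a < m" "b < m" shows "a = b"
proof -
  have "(int a + int x) mod int m = (int b + int x) mod int m"
    using assms(1) by (metis of_nat_add zmod_int)
  then have "((int a + int x) mod int m - int x) mod int m = ((int b + int x) mod int m - int x) mod int m" by simp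
  then have "int a mod int m = int b mod int m" by (simp add: mod_diff_left_eq)
  then show ?thesis using assms(2,3) by (metis mod_less zmod_int of_nat_eq_iff)
qed

definition za :: "nat \<Rightarrow> nat \<Rightarrow> nat" where
  "za k j = (if even j then j div 2 + 1 else 2*k - 1 - j div 2)"
definition zb :: "nat \<Rightarrow> nat \<Rightarrow> nat" where
  "zb k j = (if even j then 2*k - 1 - j div 2 else j div 2)"
definition rt :: "nat \<Rightarrow> nat \<Rightarrow> nat \<Rightarrow> nat" where
  "rt k x v = (v + x) mod (2*k)"
definition ext :: "(nat \<Rightarrow> nat) \<Rightarrow> nat \<Rightarrow> nat \<Rightarrow> nat \<Rightarrow> nat" where
  "ext f L w = (\<lambda>j. if j < L then f j else w)"
definition cns :: "nat \<Rightarrow> (nat \<Rightarrow> nat) \<Rightarrow> nat \<Rightarrow> nat" where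
  "cns a f = (\<lambda>j. if j = 0 then a else f (j - 1))"
definition col :: "nat \<Rightarrow> nat set \<Rightarrow> nat" where
  "col n e = (if odd n \<and> n - 1 \<in> e then 0 else (\<Sum> e) mod 2)"

lemma col_pair: "a \<noteq> b \<Longrightarrow> col n {a, b} = (if odd n \<and> (a = n - 1 \<or> b = n - 1) then 0 else (a + b) mod 2)"
  unfolding col_def by auto

lemma par_cases: fixes j :: nat obtains q where "j = 2*q" | q where "j = Suc (2*q)"
  by (metis evenE oddE Suc_eq_plus1)
lemma za_e: "za k (2*q) = q + 1" unfolding za_def by simp
lemma za_o: "za k (Suc (2*q)) = 2*k - 1 - q" unfolding za_def by simp
lemma zb_e: "zb k (2*q) = 2*k - 1 - q" unfolding zb_def by simp
lemma zb_o: "zb k (Suc (2*q)) = q" unfolding zb_def by simp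

lemma za_inj: "inj_on (za k) {..<2*k-1}"
proof (rule inj_onI)
  fix i j assume "i \<in> {..<2*k-1}" "j \<in> {..<2*k-1}" "za k i = za k j"
  then show "i = j"
    by (cases i rule: par_cases; cases j rule: par_cases; simp add: za_e za_o; arith)
qed

lemma za_range: assumes "k \<ge> 1" "j < 2*k-1" shows "1 \<le> za k j \<and> za k j < 2*k"
  using assms by (cases j rule: par_cases; simp add: za_e za_o; arith)

lemma za_img: assumes "k \<ge> 1" shows "za k ` {..<2*k-1} = {1..<2*k}"
proof (rule card_subset_eq)
  show "za k ` {..<2*k-1} \<subseteq> {1..<2*k}" using za_range[OF assms] by auto
  show "card (za k ` {..<2 * k - 1}) = card {1..<2 * k}"
    using card_image[OF za_inj[of k]] by simp
qed simp

lemma zb_inj: "inj_on (zb k) {..<2*k}"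
proof (rule inj_onI)
  fix i j assume "i \<in> {..<2*k}" "j \<in> {..<2*k}" "zb k i = zb k j"
  then show "i = j"
    by (cases i rule: par_cases; cases j rule: par_cases; simp add: zb_e zb_o; arith)
qed

lemma zb_range: assumes "k \<ge> 1" "j < 2*k" shows "zb k j < 2*k"
  using assms by (cases j rule: par_cases; simp add: zb_e zb_o; arith)

lemma zb_img: assumes "k \<ge> 1" shows "zb k ` {..<2*k} = {..<2*k}"
proof (rule card_subset_eq)
  show "zb k ` {..<2*k} \<subseteq> {..<2*k}" using zb_range[OF assms] by auto
  show "card (zb k ` {..<2 * k}) = card {..<2 * k}"
    using card_image[OF zb_inj[of k]] by simp
qed simp

lemma za_sum: assumes "Suc j < 2*k-1" shows "za k j + za k (Suc j) = (if even j then 2*k else 2*k+1)"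
proof (cases j rule: par_cases)
  case (1 q)
  then show ?thesis using assms by (simp add: za_e za_o)
next
  case (2 q)
  then have "Suc j = 2*(q+1)" by simp
  then show ?thesis using 2 assms by (simp only: za_e za_o) auto
qed

lemma zb_sum: assumes "Suc j < 2*k" shows "zb k j + zb k (Suc j) = (if even j then 2*k-1 else 2*k-2)"
proof (cases j rule: par_cases)
  case (1 q)
  then show ?thesis using assms by (simp add: zb_e zb_o)
next
  case (2 q)
  then have "Suc j = 2*(q+1)" by simp
  then show ?thesis using 2 assms by (simp only: zb_e zb_o) auto
qed

lemma za_last: assumes "k \<ge> 1" shows "za k (2*k-2) = k"
proof -
  have "2*k-2 = 2*(k-1)" by simp
  then show ?thesis using assms by (simp add: za_e)
qed
lemma zb_last: assumes "k \<ge> 1" shows "zb k (2*k-1) = k - 1"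
proof -
  have "2*k-1 = Suc (2*(k-1))" using assms by simp
  then show ?thesis by (simp only: zb_o)
qed
lemma za_0: "za k 0 = 1" unfolding za_def by simp

lemma rt_inj: "inj_on (rt k x) {..<2*k}"
  unfolding inj_on_def rt_def using modinj by blast

lemma rt_lt: "k \<ge> 1 \<Longrightarrow> rt k x v < 2*k" unfolding rt_def by simp

lemma rt_img: assumes "k \<ge> 1" shows "rt k x ` {..<2*k} = {..<2*k}"
  using rt_inj[of k x] rt_lt[OF assms] by (intro endo_inj_surj) auto

lemma rt_img1: assumes "k \<ge> 1" "x < 2*k" shows "rt k x ` {1..<2*k} = {..<2*k} - {x}"
proof -
  have e: "{1..<2*k} = {..<2*k} - {0}" by auto
  have "rt k x ` ({..<2*k} - {0}) = rt k x ` {..<2*k} - rt k x ` {0}"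
    using assms by (intro inj_on_image_set_diff[OF rt_inj]) auto
  also have "\<dots> = {..<2*k} - {x}" using rt_img[OF assms(1)] assms(2) by (simp add: rt_def)
  finally show ?thesis using e by simp
qed

lemma rt_par: "(rt k x a + rt k x b) mod 2 = (a + b) mod 2"
  unfolding rt_def by (smt (verit, ccfv_SIG) even_add mod2_eq_if mod_mod_cancel dvd_triv_left)

lemma pair_sum:
  fixes a b a' b' :: nat
  assumes "inj_on h A" "a \<in> A" "b \<in> A" "a' \<in> A" "b' \<in> A" "{h a, h b} = {h a', h b'}"
  shows "a + b = a' + b'"
proof -
  from assms(6) have "(h a = h a' \<and> h b = h b') \<or> (h a = h b' \<and> h b = h a')" by (auto simp: doubleton_eq_iff)
  then have "(a = a' \<and> b = b') \<or> (a = b' \<and> b = a')" using assms(1-5) by (auto dest: inj_onD)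
  then show ?thesis by (auto simp: add.commute)
qed

lemma ext_img: "ext f L w ` {..<Suc L} = f ` {..<L} \<union> {w}"
  unfolding ext_def by (auto simp: image_def less_Suc_eq)

lemma ext_inj: "inj_on f {..<L} \<Longrightarrow> w \<notin> f ` {..<L} \<Longrightarrow> inj_on (ext f L w) {..<Suc L}"
  unfolding ext_def inj_on_def by (auto simp: less_Suc_eq)

lemma PE_ext: assumes "L \<ge> 1" shows "PE (ext f L w) (Suc L) = PE f L \<union> {{f (L - 1), w}}"
proof -
  have "PE (ext f L w) (Suc L) = {{ext f L w i, ext f L w (Suc i)} |i. Suc i < Suc L}" by (simp add: PE_def)
  also have "\<dots> = {{f i, f (Suc i)} |i. Suc i < L} \<union> {{f (L - 1), w}}"
  proof (intro equalityI subsetI)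
    fix e assume "e \<in> {{ext f L w i, ext f L w (Suc i)} |i. Suc i < Suc L}"
    then obtain i where "e = {ext f L w i, ext f L w (Suc i)}" "Suc i < Suc L" by blast
    then show "e \<in> {{f i, f (Suc i)} |i. Suc i < L} \<union> {{f (L - 1), w}}"
    proof (cases "Suc i < L")
      case True then show ?thesis using \<open>e = _\<close> unfolding ext_def by auto
    next
      case False then have "i = L - 1" using \<open>Suc i < Suc L\<close> by simp
      then show ?thesis using \<open>e = _\<close> False assms unfolding ext_def by auto
    qed
  next
    fix e assume "e \<in> {{f i, f (Suc i)} |i. Suc i < L} \<union> {{f (L - 1), w}}"
    then show "e \<in> {{ext f L w i, ext f L w (Suc i)} |i. Suc i < Suc L}"
    proof
      assume "e \<in> {{f i, f (Suc i)} |i. Suc i < L}"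
      then obtain i where "e = {f i, f (Suc i)}" "Suc i < L" by blast
      then show ?thesis unfolding ext_def by (auto intro!: exI[of _ i])
    next
      assume "e \<in> {{f (L - 1), w}}"
      then show ?thesis unfolding ext_def using assms by (auto intro!: exI[of _ "L - 1"])
    qed
  qed
  finally show ?thesis by (simp add: PE_def)
qed

lemma cns_img: "cns a f ` {..<Suc L} = insert a (f ` {..<L})"
proof (intro equalityI subsetI)
  fix y assume "y \<in> cns a f ` {..<Suc L}"
  then obtain j where "j < Suc L" "y = cns a f j" by auto
  then show "y \<in> insert a (f ` {..<L})" unfolding cns_def by (cases j) auto
next
  fix y assume "y \<in> insert a (f ` {..<L})"
  then show "y \<in> cns a f ` {..<Suc L}"
  proof
    assume "y = a" then show ?thesis unfolding cns_def by (auto intro!: image_eqI[of _ _ 0])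
  next
    assume "y \<in> f ` {..<L}"
    then obtain j where "j < L" "y = f j" by auto
    then show ?thesis unfolding cns_def by (auto intro!: image_eqI[of _ _ "Suc j"])
  qed
qed

lemma cns_inj: "inj_on f {..<L} \<Longrightarrow> a \<notin> f ` {..<L} \<Longrightarrow> inj_on (cns a f) {..<Suc L}"
  unfolding cns_def inj_on_def
  by (auto simp: less_Suc_eq_0_disj)

lemma PE_cns: assumes "L \<ge> 1" shows "PE (cns a f) (Suc L) = insert {a, f 0} (PE f L)"
proof (intro equalityI subsetI)
  fix e assume "e \<in> PE (cns a f) (Suc L)"
  then obtain i where "e = {cns a f i, cns a f (Suc i)}" "Suc i < Suc L" unfolding PE_def by blast
  then show "e \<in> insert {a, f 0} (PE f L)"
    unfolding cns_def PE_def by (cases i) auto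
next
  fix e assume "e \<in> insert {a, f 0} (PE f L)"
  then show "e \<in> PE (cns a f) (Suc L)"
  proof
    assume "e = {a, f 0}" then show ?thesis unfolding PE_def cns_def using assms
      by force
  next
    assume "e \<in> PE f L"
    then obtain i where "e = {f i, f (Suc i)}" "Suc i < L" unfolding PE_def by blast
    then have "e = {cns a f (Suc i), cns a f (Suc (Suc i))}" "Suc (Suc i) < Suc L" unfolding cns_def by auto
    then show ?thesis unfolding PE_def by blast
  qed
qed

lemma edgeE:
  assumes "inj_on f {..<L}" "f ` {..<L} \<subseteq> {..<n}" "Suc i < L"
  shows "{f i, f (Suc i)} \<in> complete_E n"
proof -
  have "f i \<noteq> f (Suc i)" using assms(1,3) by (auto dest: inj_onD)
  moreover have "f i < n" "f (Suc i) < n" using assms(2,3) by (auto simp: image_subset_iff)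
  ultimately show ?thesis unfolding complete_E_def by blast
qed

lemma alt_pat:
  assumes "\<And>j. Suc j < L \<Longrightarrow> c {f j, f (Suc j)} = (if even j then p else 1 - p)" "p \<le> (1::nat)"
    and "Suc (Suc j) < L"
  shows "c {f j, f (Suc j)} \<noteq> c {f (Suc j), f (Suc (Suc j))}"
  using assms(1)[of j] assms(1)[of "Suc j"] assms(2,3) by (auto; arith)

lemma finish:
  assumes injf: "inj_on f {..<L}" and injg: "inj_on g {..<L'}" and L: "L \<ge> 2" "L' \<ge> 2"
    and imf: "f ` {..<L} = S" and img: "g ` {..<L'} = {..<n}" and Ssub: "S \<subseteq> {..<n}"
    and altf: "\<And>j. Suc (Suc j) < L \<Longrightarrow> c {f j, f (Suc j)} \<noteq> c {f (Suc j), f (Suc (Suc j))}"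
    and altg: "\<And>j. Suc (Suc j) < L' \<Longrightarrow> c {g j, g (Suc j)} \<noteq> c {g (Suc j), g (Suc (Suc j))}"
    and disj: "PE f L \<inter> PE g L' = {}"
  shows "\<exists>T. int_disj_S_trees {..<n} (complete_E n) S 2 T \<and> (\<forall>i<2. proper_tree c (snd (T i)))"
proof -
  define T where "T = (\<lambda>i::nat. if i = 0 then (S, PE f L) else ({..<n}, PE g L'))"
  have tf: "is_tree_in {..<n} (complete_E n) S (PE f L)"
    using path_tree[OF injf _ _ edgeE[OF injf]] L imf Ssub by auto
  have tg: "is_tree_in {..<n} (complete_E n) {..<n} (PE g L')"
    using path_tree[OF injg _ _ edgeE[OF injg]] L img by auto
  have pf: "proper_tree c (PE f L)" by (rule path_proper[OF injf altf])
  have pg: "proper_tree c (PE g L')" by (rule path_proper[OF injg altg])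
  have two: "\<And>i::nat. i < 2 \<Longrightarrow> i = 0 \<or> i = 1" by auto
  have "int_disj_S_trees {..<n} (complete_E n) S 2 T"
    unfolding int_disj_S_trees_def
  proof (intro conjI allI impI)
    fix i :: nat assume "i < 2"
    then show "is_S_tree {..<n} (complete_E n) S (fst (T i)) (snd (T i))"
      using two[of i] tf tg Ssub unfolding T_def is_S_tree_def by auto
  next
    fix i j :: nat assume "i < 2" "j < 2" "i \<noteq> j"
    then have "(i = 0 \<and> j = 1) \<or> (i = 1 \<and> j = 0)" by auto
    then show "snd (T i) \<inter> snd (T j) = {}" using disj unfolding T_def by auto
  next
    fix i j :: nat assume "i < 2" "j < 2" "i \<noteq> j"
    then have "(i = 0 \<and> j = 1) \<or> (i = 1 \<and> j = 0)" by auto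
    then show "fst (T i) \<inter> fst (T j) = S" using Ssub unfolding T_def by auto
  qed
  moreover have "\<forall>i<2. proper_tree c (snd (T i))"
    using two pf pg unfolding T_def by auto
  ultimately show ?thesis by blast
qed

lemma pair_sum_id: fixes a b a' b' :: nat shows "{a, b} = {a', b'} \<Longrightarrow> a + b = a' + b'"
  by (auto simp: doubleton_eq_iff)

lemma PE_sub: "f ` {..<L} \<subseteq> A \<Longrightarrow> e \<in> PE f L \<Longrightarrow> e \<subseteq> A"
  unfolding PE_def by auto

lemma rz_inj:
  assumes "k \<ge> 1"
  shows "inj_on (rt k x \<circ> za k) {..<2*k-1}" "inj_on (rt k x \<circ> zb k) {..<2*k}"
proof -
  show "inj_on (rt k x \<circ> za k) {..<2*k-1}"
    by (rule comp_inj_on[OF za_inj inj_on_subset[OF rt_inj[of k x]]]) (use za_img[OF assms] in auto)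
  show "inj_on (rt k x \<circ> zb k) {..<2*k}"
    by (rule comp_inj_on[OF zb_inj inj_on_subset[OF rt_inj[of k x]]]) (use zb_img[OF assms] in auto)
qed

lemma rz_img:
  assumes "k \<ge> 1" "x < 2*k"
  shows "(rt k x \<circ> za k) ` {..<2*k-1} = {..<2*k} - {x}" "(rt k x \<circ> zb k) ` {..<2*k} = {..<2*k}"
proof -
  have "(rt k x \<circ> za k) ` {..<2*k-1} = rt k x ` (za k ` {..<2*k-1})" by (rule image_comp[symmetric])
  then show "(rt k x \<circ> za k) ` {..<2*k-1} = {..<2*k} - {x}"
    using za_img[OF assms(1)] rt_img1[OF assms] by simp
  have "(rt k x \<circ> zb k) ` {..<2*k} = rt k x ` (zb k ` {..<2*k})" by (rule image_comp[symmetric])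
  then show "(rt k x \<circ> zb k) ` {..<2*k} = {..<2*k}"
    using zb_img[OF assms(1)] rt_img[OF assms(1)] by simp
qed

lemma rz_disj:
  assumes "k \<ge> 2"
  shows "PE (rt k x \<circ> za k) (2*k-1) \<inter> PE (rt k x \<circ> zb k) (2*k) = {}"
proof (rule ccontr)
  assume "\<not> ?thesis"
  then obtain e where "e \<in> PE (rt k x \<circ> za k) (2*k-1)" "e \<in> PE (rt k x \<circ> zb k) (2*k)" by blast
  then obtain i j where i: "e = {rt k x (za k i), rt k x (za k (Suc i))}" "Suc i < 2*k-1"
    and j: "e = {rt k x (zb k j), rt k x (zb k (Suc j))}" "Suc j < 2*k"
    unfolding PE_def by auto
  have "za k i + za k (Suc i) = zb k j + zb k (Suc j)"
    using pair_sum[OF rt_inj[of k x], of "za k i" "za k (Suc i)" "zb k j" "zb k (Suc j)"] i j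
      za_range[of k i] za_range[of k "Suc i"] zb_range[of k j] zb_range[of k "Suc j"] assms
    by auto
  then show False using za_sum[OF i(2)] zb_sum[OF j(2)] assms by (auto split: if_splits)
qed

lemma rza_col:
  assumes "k \<ge> 2" "Suc j < 2*k-1"
  shows "((rt k x \<circ> za k) j + (rt k x \<circ> za k) (Suc j)) mod 2 = (if even j then 0 else 1)"
  using rt_par[of k x "za k j" "za k (Suc j)"] za_sum[OF assms(2)] by auto

lemma rzb_col:
  assumes "k \<ge> 2" "Suc j < 2*k"
  shows "((rt k x \<circ> zb k) j + (rt k x \<circ> zb k) (Suc j)) mod 2 = (if even j then 1 else 0)"
proof -
  have "(zb k j + zb k (Suc j)) mod 2 = (if even j then 1 else 0)"
    using zb_sum[OF assms(2)] assms(1) by (auto; presburger)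
  then show ?thesis using rt_par[of k x "zb k j" "zb k (Suc j)"] by auto
qed

lemma col_inner: "a \<noteq> b \<Longrightarrow> a < n - 1 \<Longrightarrow> b < n - 1 \<Longrightarrow> col n {a, b} = (a + b) mod 2"
  by (simp add: col_pair)
lemma col_w: "odd n \<Longrightarrow> a \<noteq> n - 1 \<Longrightarrow> col n {a, n - 1} = 0"
  by (simp add: col_pair)
lemma col_even: "even n \<Longrightarrow> a \<noteq> b \<Longrightarrow> col n {a, b} = (a + b) mod 2"
  by (simp add: col_pair)

lemma inj_ne: "inj_on f {..<L} \<Longrightarrow> Suc j < L \<Longrightarrow> f j \<noteq> f (Suc j)"
  by (auto dest: inj_onD)

lemma case_even:
  assumes k: "k \<ge> 2" and x: "x < 2*k"
  shows "\<exists>T. int_disj_S_trees {..<2*k} (complete_E (2*k)) ({..<2*k} - {x}) 2 T \<and>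
           (\<forall>i<2. proper_tree (col (2*k)) (snd (T i)))"
proof (rule finish[OF rz_inj(1) rz_inj(2) _ _ rz_img(1) rz_img(2)])
  show "1 \<le> k" "1 \<le> k" "1 \<le> k" "1 \<le> k" "x < 2*k" "x < 2*k" using k x by auto
  show "2 \<le> 2 * k - 1" "2 \<le> 2 * k" using k by auto
  show "{..<2 * k} - {x} \<subseteq> {..<2 * k}" by auto
  show "PE (rt k x \<circ> za k) (2 * k - 1) \<inter> PE (rt k x \<circ> zb k) (2 * k) = {}" by (rule rz_disj[OF k])
  fix j
  show "Suc (Suc j) < 2 * k - 1 \<Longrightarrow>
    col (2 * k) {(rt k x \<circ> za k) j, (rt k x \<circ> za k) (Suc j)} \<noteq>
    col (2 * k) {(rt k x \<circ> za k) (Suc j), (rt k x \<circ> za k) (Suc (Suc j))}"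
  proof (rule alt_pat[where p = 0])
    fix j assume "Suc j < 2 * k - 1"
    then show "col (2 * k) {(rt k x \<circ> za k) j, (rt k x \<circ> za k) (Suc j)} = (if even j then 0 else 1 - 0)"
      using col_even[OF _ inj_ne[OF rz_inj(1)]] rza_col[OF k] k by auto
  qed auto
  show "Suc (Suc j) < 2 * k \<Longrightarrow>
    col (2 * k) {(rt k x \<circ> zb k) j, (rt k x \<circ> zb k) (Suc j)} \<noteq>
    col (2 * k) {(rt k x \<circ> zb k) (Suc j), (rt k x \<circ> zb k) (Suc (Suc j))}"
  proof (rule alt_pat[where p = 1])
    fix j assume "Suc j < 2 * k"
    then show "col (2 * k) {(rt k x \<circ> zb k) j, (rt k x \<circ> zb k) (Suc j)} = (if even j then 1 else 1 - 1)"
      using col_even[OF _ inj_ne[OF rz_inj(2)]] rzb_col[OF k] k by auto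
  qed auto
qed

lemma case_odd1:
  assumes k: "k \<ge> 2" and x: "x < 2*k"
  shows "\<exists>T. int_disj_S_trees {..<Suc (2*k)} (complete_E (Suc (2*k))) ({..<Suc (2*k)} - {x}) 2 T \<and>
           (\<forall>i<2. proper_tree (col (Suc (2*k))) (snd (T i)))"
proof -
  define fa where "fa = rt k x \<circ> za k"
  define fb where "fb = rt k x \<circ> zb k"
  define f where "f = ext fa (2*k-1) (2*k)"
  define g where "g = ext fb (2*k) (2*k)"
  have k1: "k \<ge> 1" using k by simp
  have ia: "inj_on fa {..<2*k-1}" and ib: "inj_on fb {..<2*k}" unfolding fa_def fb_def using rz_inj[OF k1] by auto
  have ima: "fa ` {..<2*k-1} = {..<2*k} - {x}" and imb: "fb ` {..<2*k} = {..<2*k}"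
    unfolding fa_def fb_def using rz_img[OF k1 x] by auto
  have Lf: "Suc (2*k-1) = 2*k" using k by simp
  have injf: "inj_on f {..<Suc (2*k-1)}" unfolding f_def by (rule ext_inj[OF ia]) (use ima in auto)
  have injg: "inj_on g {..<Suc (2*k)}" unfolding g_def by (rule ext_inj[OF ib]) (use imb in auto)
  have imf: "f ` {..<Suc (2*k-1)} = {..<Suc (2*k)} - {x}" unfolding f_def ext_img ima using x by auto
  have img: "g ` {..<Suc (2*k)} = {..<Suc (2*k)}" unfolding g_def ext_img imb by auto
  have fa_lt: "\<And>j. fa j < 2*k" unfolding fa_def using rt_lt[OF k1] by simp
  have fb_lt: "\<And>j. fb j < 2*k" unfolding fb_def using rt_lt[OF k1] by simp
  have disj: "PE f (Suc (2*k-1)) \<inter> PE g (Suc (2*k)) = {}"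
  proof -
    have d1: "PE fa (2*k-1) \<inter> PE fb (2*k) = {}" unfolding fa_def fb_def by (rule rz_disj[OF k])
    have s1: "\<And>e. e \<in> PE fa (2*k-1) \<Longrightarrow> 2*k \<notin> e" using PE_sub[of fa "2*k-1" "{..<2*k}"] fa_lt by blast
    have s2: "\<And>e. e \<in> PE fb (2*k) \<Longrightarrow> 2*k \<notin> e" using PE_sub[of fb "2*k" "{..<2*k}"] fb_lt by blast
    have ne: "fa (2*k-1-1) \<noteq> fb (2*k-1)"
    proof
      assume "fa (2*k-1-1) = fb (2*k-1)"
      then have "rt k x (za k (2*k-2)) = rt k x (zb k (2*k-1))" unfolding fa_def fb_def by (simp add: numeral_2_eq_2)
      then have "za k (2*k-2) = zb k (2*k-1)"
        using inj_onD[OF rt_inj[of k x]] za_range[of k "2*k-2"] zb_range[of k "2*k-1"] k by auto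
      then show False using za_last[OF k1] zb_last[OF k1] k1 by linarith
    qed
    have w1: "{fa (2*k-1-1), 2*k} \<noteq> {fb (2*k-1), 2*k}"
      using ne fa_lt fb_lt by (auto simp: doubleton_eq_iff)
    have pf: "PE f (Suc (2*k-1)) = PE fa (2*k-1) \<union> {{fa (2*k-1-1), 2*k}}"
      unfolding f_def by (rule PE_ext) (use k in simp)
    have pg: "PE g (Suc (2*k)) = PE fb (2*k) \<union> {{fb (2*k-1), 2*k}}"
      unfolding g_def using PE_ext[of "2*k" fb "2*k"] k by simp
    have a1: "{fa (2*k-1-1), 2*k} \<notin> PE fb (2*k)" using s2 by blast
    have a2: "{fb (2*k-1), 2*k} \<notin> PE fa (2*k-1)" using s1 by blast
    show ?thesis unfolding pf pg using d1 w1 a1 a2 by blast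
  qed
  show ?thesis
  proof (rule finish[OF injf injg _ _ imf img])
    show "2 \<le> Suc (2 * k - 1)" "2 \<le> Suc (2 * k)" using k by auto
    show "{..<Suc (2 * k)} - {x} \<subseteq> {..<Suc (2 * k)}" by auto
    show "PE f (Suc (2 * k - 1)) \<inter> PE g (Suc (2 * k)) = {}" by (rule disj)
    fix j
    show "Suc (Suc j) < Suc (2 * k - 1) \<Longrightarrow>
      col (Suc (2 * k)) {f j, f (Suc j)} \<noteq> col (Suc (2 * k)) {f (Suc j), f (Suc (Suc j))}"
    proof (rule alt_pat[where p = 0])
      fix j assume j: "Suc j < Suc (2 * k - 1)"
      show "col (Suc (2 * k)) {f j, f (Suc j)} = (if even j then 0 else 1 - 0)"
      proof (cases "Suc j < 2*k-1")
        case True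
        then have "f j = fa j" "f (Suc j) = fa (Suc j)" unfolding f_def ext_def by auto
        moreover have "fa j \<noteq> fa (Suc j)" using inj_ne[OF ia True] .
        ultimately show ?thesis using col_inner[of "fa j" "fa (Suc j)" "Suc (2*k)"] fa_lt
            rza_col[OF k True, of x] unfolding fa_def by auto
      next
        case False
        then have jj: "j = 2*k-2" using j by simp
        then have "f j = fa j" "f (Suc j) = 2*k" unfolding f_def ext_def using k by auto
        moreover have "even j" using jj k by simp
        ultimately show ?thesis using col_w[of "Suc (2*k)" "fa j"] fa_lt[of j] by auto
      qed
    qed auto
    show "Suc (Suc j) < Suc (2 * k) \<Longrightarrow>
      col (Suc (2 * k)) {g j, g (Suc j)} \<noteq> col (Suc (2 * k)) {g (Suc j), g (Suc (Suc j))}"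
    proof (rule alt_pat[where p = 1])
      fix j assume j: "Suc j < Suc (2 * k)"
      show "col (Suc (2 * k)) {g j, g (Suc j)} = (if even j then 1 else 1 - 1)"
      proof (cases "Suc j < 2*k")
        case True
        then have "g j = fb j" "g (Suc j) = fb (Suc j)" unfolding g_def ext_def by auto
        moreover have "fb j \<noteq> fb (Suc j)" using inj_ne[OF ib True] .
        ultimately show ?thesis using col_inner[of "fb j" "fb (Suc j)" "Suc (2*k)"] fb_lt
            rzb_col[OF k True, of x] unfolding fb_def by auto
      next
        case False
        then have jj: "j = 2*k-1" using j by simp
        then have "g j = fb j" "g (Suc j) = 2*k" unfolding g_def ext_def using k by auto
        moreover have "odd j" using jj k by simp
        ultimately show ?thesis using col_w[of "Suc (2*k)" "fb j"] fb_lt[of j] by auto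
      qed
    qed auto
  qed
qed

lemma case_odd2:
  assumes k: "k \<ge> 2"
  shows "\<exists>T. int_disj_S_trees {..<Suc (2*k)} (complete_E (Suc (2*k))) ({..<Suc (2*k)} - {2*k}) 2 T \<and>
           (\<forall>i<2. proper_tree (col (Suc (2*k))) (snd (T i)))"
proof -
  define h where "h = ext (za k) (2*k-1) (2*k)"
  define g where "g = cns 0 h"
  have k1: "k \<ge> 1" using k by simp
  have za_lt: "\<And>j. j < 2*k-1 \<Longrightarrow> za k j < 2*k" using za_range[OF k1] by blast
  have zb_lt: "\<And>j. j < 2*k \<Longrightarrow> zb k j < 2*k" using zb_range[OF k1] by blast
  have injh: "inj_on h {..<Suc (2*k-1)}" unfolding h_def by (rule ext_inj[OF za_inj]) (use za_img[OF k1] in auto)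
  have imh: "h ` {..<Suc (2*k-1)} = {1..<Suc (2*k)}" unfolding h_def ext_img za_img[OF k1] using k1 by auto
  have injg: "inj_on g {..<Suc (Suc (2*k-1))}" unfolding g_def by (rule cns_inj[OF injh]) (use imh in auto)
  have img: "g ` {..<Suc (Suc (2*k-1))} = {..<Suc (2*k)}" unfolding g_def cns_img imh using k by auto
  have imf: "zb k ` {..<2*k} = {..<Suc (2*k)} - {2*k}" using zb_img[OF k1] by auto
  have disj: "PE (zb k) (2*k) \<inter> PE g (Suc (Suc (2*k-1))) = {}"
  proof -
    have ph: "PE h (Suc (2*k-1)) = PE (za k) (2*k-1) \<union> {{za k (2*k-1-1), 2*k}}"
      unfolding h_def by (rule PE_ext) (use k in simp)
    have h0: "h 0 = 1" unfolding h_def ext_def using k za_0 by simp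
    have pg: "PE g (Suc (Suc (2*k-1))) = insert {0, 1} (PE h (Suc (2*k-1)))"
      unfolding g_def using PE_cns[of "Suc (2*k-1)" 0 h] h0 by simp
    have sumb: "\<And>e. e \<in> PE (zb k) (2*k) \<Longrightarrow> \<exists>j. Suc j < 2*k \<and> e = {zb k j, zb k (Suc j)}"
      unfolding PE_def by blast
    have a1: "{0, 1} \<notin> PE (zb k) (2*k)"
    proof
      assume "{0, 1} \<in> PE (zb k) (2*k)"
      then obtain j where j: "Suc j < 2*k" "{0,1} = {zb k j, zb k (Suc j)}" using sumb by blast
      have "0 + 1 = zb k j + zb k (Suc j)" by (rule pair_sum_id[OF j(2)])
      then have s1: "zb k j + zb k (Suc j) = 1" by simp
      have "zb k j + zb k (Suc j) \<ge> 2" using zb_sum[OF j(1)] k by (cases "even j") simp_all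
      then show False using s1 by simp
    qed
    have a2: "PE (za k) (2*k-1) \<inter> PE (zb k) (2*k) = {}"
    proof (rule ccontr)
      assume "\<not> ?thesis"
      then obtain e where "e \<in> PE (za k) (2*k-1)" "e \<in> PE (zb k) (2*k)" by blast
      then obtain i j where i: "e = {za k i, za k (Suc i)}" "Suc i < 2*k-1"
        and j: "e = {zb k j, zb k (Suc j)}" "Suc j < 2*k" unfolding PE_def by auto
      have "{za k i, za k (Suc i)} = {zb k j, zb k (Suc j)}" using i(1) j(1) by simp
      then have "za k i + za k (Suc i) = zb k j + zb k (Suc j)" by (rule pair_sum_id)
      then show False using za_sum[OF i(2)] zb_sum[OF j(2)] k by (auto split: if_splits)
    qed
    have zbs: "zb k ` {..<2*k} \<subseteq> {..<2*k}" using zb_lt by auto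
    have a3: "{za k (2*k-1-1), 2*k} \<notin> PE (zb k) (2*k)"
    proof
      assume "{za k (2*k-1-1), 2*k} \<in> PE (zb k) (2*k)"
      then have "{za k (2*k-1-1), 2*k} \<subseteq> {..<2*k}" by (rule PE_sub[OF zbs])
      then show False by simp
    qed
    show ?thesis unfolding pg ph using a1 a2 a3 by blast
  qed
  show ?thesis
  proof (rule finish[OF zb_inj injg _ _ imf img])
    show "2 \<le> 2 * k" "2 \<le> Suc (Suc (2 * k - 1))" using k by auto
    show "{..<Suc (2 * k)} - {2 * k} \<subseteq> {..<Suc (2 * k)}" by auto
    show "PE (zb k) (2 * k) \<inter> PE g (Suc (Suc (2 * k - 1))) = {}" by (rule disj)
    fix j
    show "Suc (Suc j) < 2 * k \<Longrightarrow>
      col (Suc (2 * k)) {zb k j, zb k (Suc j)} \<noteq> col (Suc (2 * k)) {zb k (Suc j), zb k (Suc (Suc j))}"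
    proof (rule alt_pat[where p = 1])
      fix j assume j: "Suc j < 2 * k"
      have "zb k j \<noteq> zb k (Suc j)" using inj_ne[OF zb_inj j] .
      moreover have "(zb k j + zb k (Suc j)) mod 2 = (if even j then 1 else 0)"
        using zb_sum[OF j] k by (auto; presburger)
      ultimately show "col (Suc (2 * k)) {zb k j, zb k (Suc j)} = (if even j then 1 else 1 - 1)"
        using col_inner[of "zb k j" "zb k (Suc j)" "Suc (2*k)"] zb_lt[of j] zb_lt[of "Suc j"] j by auto
    qed auto
    show "Suc (Suc j) < Suc (Suc (2 * k - 1)) \<Longrightarrow>
      col (Suc (2 * k)) {g j, g (Suc j)} \<noteq> col (Suc (2 * k)) {g (Suc j), g (Suc (Suc j))}"
    proof (rule alt_pat[where p = 1])
      fix j assume j: "Suc j < Suc (Suc (2 * k - 1))"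
      show "col (Suc (2 * k)) {g j, g (Suc j)} = (if even j then 1 else 1 - 1)"
      proof (cases j)
        case 0
        have "g 0 = 0" "g 1 = 1" unfolding g_def cns_def h_def ext_def using k za_0 by auto
        then show ?thesis using 0 col_inner[of 0 1 "Suc (2*k)"] k by auto
      next
        case (Suc j')
        have gj: "g j = h j'" "g (Suc j) = h (Suc j')" unfolding g_def cns_def Suc by auto
        show ?thesis
        proof (cases "Suc j' < 2*k-1")
          case True
          then have "h j' = za k j'" "h (Suc j') = za k (Suc j')" unfolding h_def ext_def by auto
          moreover have "za k j' \<noteq> za k (Suc j')" using inj_ne[OF za_inj True] .
          moreover have "(za k j' + za k (Suc j')) mod 2 = (if even j' then 0 else 1)"
            using za_sum[OF True] by auto
          ultimately show ?thesis using gj col_inner[of "za k j'" "za k (Suc j')" "Suc (2*k)"]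
              za_lt[of j'] za_lt[of "Suc j'"] True Suc by auto
        next
          case False
          then have jj: "j' = 2*k-2" using j Suc by simp
          then have "h j' = za k j'" "h (Suc j') = 2*k" unfolding h_def ext_def using k by auto
          moreover have "odd j" using jj k Suc by simp
          moreover have "za k j' < 2*k" using za_lt[of j'] jj k by simp
          ultimately show ?thesis using gj col_w[of "Suc (2*k)" "za k j'"] by auto
        qed
      qed
    qed auto
  qed
qed

lemma constr:
  assumes n: "n \<ge> 4" and x: "x < n"
  shows "\<exists>T. int_disj_S_trees {..<n} (complete_E n) ({..<n} - {x}) 2 T \<and>
           (\<forall>i<2. proper_tree (col n) (snd (T i)))"
proof (cases "even n")
  case True
  then obtain k where k: "n = 2*k" by blast
  then show ?thesis using case_even[of k x] n x by auto
next
  case False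
  then obtain k where k: "n = Suc (2*k)" by (metis oddE Suc_eq_plus1)
  then have k2: "k \<ge> 2" using n False by presburger
  show ?thesis
  proof (cases "x < 2*k")
    case True then show ?thesis using case_odd1[OF k2 True] k by simp
  next
    case False then have "x = 2*k" using x k by simp
    then show ?thesis using case_odd2[OF k2] k by simp
  qed
qed

lemma constrS:
  assumes n: "n \<ge> 4" and S: "S \<subseteq> {..<n}" "card S = n - 1"
  shows "\<exists>T. int_disj_S_trees {..<n} (complete_E n) S 2 T \<and>
           (\<forall>i<2. proper_tree (col n) (snd (T i)))"
proof -
  have "S \<noteq> {..<n}" using S n by auto
  then obtain x where x: "x < n" "x \<notin> S" using S by auto
  have "S = {..<n} - {x}"
  proof (rule card_subset_eq)
    show "S \<subseteq> {..<n} - {x}" using S x by auto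
    show "card S = card ({..<n} - {x})" using S x by simp
  qed simp
  then show ?thesis using constr[OF n x(1)] by simp
qed

lemma tree_edge:
  assumes "is_tree_in V E VT ET" "u \<in> VT" "v \<in> VT" "u \<noteq> v"
  shows "ET \<noteq> {}"
proof -
  have "(u, v) \<in> (adj_rel ET)\<^sup>*" using assms unfolding is_tree_in_def by blast
  then obtain y where "(u, y) \<in> adj_rel ET" using assms(4) by (metis converse_rtranclE)
  then show ?thesis unfolding adj_rel_def by auto
qed

lemma fin_L:
  assumes S: "a \<in> S" "b \<in> S" "a \<noteq> b" and E: "finite E"
  shows "{l. \<exists>T. int_disj_S_trees V E S l T} \<subseteq> {..card E}"
proof
  fix l assume "l \<in> {l. \<exists>T. int_disj_S_trees V E S l T}"
  then obtain T where T: "int_disj_S_trees V E S l T" by blast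
  have ne: "\<And>i. i < l \<Longrightarrow> snd (T i) \<noteq> {}"
  proof -
    fix i assume "i < l"
    then have st: "is_S_tree V E S (fst (T i)) (snd (T i))" using T unfolding int_disj_S_trees_def by blast
    then have t1: "is_tree_in V E (fst (T i)) (snd (T i))" and t2: "S \<subseteq> fst (T i)"
      unfolding is_S_tree_def by auto
    show "snd (T i) \<noteq> {}"
      by (rule tree_edge[OF t1, of a b]) (use t2 S in auto)
  qed
  have sub: "snd (T i) \<subseteq> E" if "i < l" for i
  proof -
    have "is_S_tree V E S (fst (T i)) (snd (T i))" using T that unfolding int_disj_S_trees_def by blast
    then show ?thesis unfolding is_S_tree_def is_tree_in_def by blast
  qed
  define e where "e = (\<lambda>i. SOME x. x \<in> snd (T i))"
  have eT: "e i \<in> snd (T i)" if "i < l" for i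
    unfolding e_def using ne[OF that] by (simp add: some_in_eq)
  have "inj_on e {..<l}"
  proof (rule inj_onI)
    fix i j assume "i \<in> {..<l}" "j \<in> {..<l}" "e i = e j"
    then have il: "i < l" "j < l" and eij: "e i = e j" by auto
    have "e i \<in> snd (T i)" using eT[OF il(1)] .
    moreover have "e i \<in> snd (T j)" using eT[OF il(2)] eij by simp
    moreover note il
    moreover have "i \<noteq> j \<Longrightarrow> snd (T i) \<inter> snd (T j) = {}"
      using T \<open>i < l\<close> \<open>j < l\<close> unfolding int_disj_S_trees_def by blast
    ultimately show "i = j" by blast
  qed
  moreover have "e ` {..<l} \<subseteq> E" using eT sub by blast
  ultimately have "card {..<l} \<le> card E" by (rule card_inj_on_le[OF _ _ E])
  then show "l \<in> {..card E}" by simp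
qed

lemma proper_D:
  assumes "proper_tree c ET" "e1 \<in> ET" "e2 \<in> ET" "e1 \<noteq> e2" "x \<in> e1" "x \<in> e2"
  shows "c e1 \<noteq> c e2"
proof -
  have "e1 \<inter> e2 \<noteq> {}" using assms(5,6) by blast
  then show ?thesis using assms(1-4) unfolding proper_tree_def by blast
qed

lemma one_color_fail:
  assumes T: "is_tree_in V E VT ET" and P: "proper_tree c ET" and z: "\<forall>e\<in>ET. c e = 0"
    and abd: "a \<in> VT" "b \<in> VT" "d \<in> VT" "a \<noteq> b" "a \<noteq> d" "b \<noteq> d"
  shows False
proof -
  define R where "R = {v. v = a \<or> {a, v} \<in> ET}"
  have cl: "(a, v) \<in> (adj_rel ET)\<^sup>* \<Longrightarrow> v \<in> R" for v
  proof (induction rule: rtrancl_induct)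
    case base then show ?case unfolding R_def by simp
  next
    case (step y z')
    then have yz: "{y, z'} \<in> ET" unfolding adj_rel_def by simp
    show ?case
    proof (cases "y = a")
      case True then show ?thesis using yz unfolding R_def by simp
    next
      case False
      then have ay: "{a, y} \<in> ET" using step.IH unfolding R_def by simp
      show ?thesis
      proof (cases "{y, z'} = {a, y}")
        case True
        then have "z' = a \<or> z' = y" by (auto simp: doubleton_eq_iff)
        then show ?thesis using ay unfolding R_def by auto
      next
        case False
        then have "c {y, z'} \<noteq> c {a, y}" by (rule proper_D[OF P yz ay, of y]) simp_all
        then show ?thesis using z yz ay by simp
      qed
    qed
  qed
  have "(a, b) \<in> (adj_rel ET)\<^sup>*" "(a, d) \<in> (adj_rel ET)\<^sup>*" using T abd unfolding is_tree_in_def by blast+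
  then have "b \<in> R" "d \<in> R" using cl by auto
  then have ab: "{a, b} \<in> ET" and ad: "{a, d} \<in> ET" using abd unfolding R_def by auto
  have "{a, b} \<noteq> {a, d}" using abd by (auto simp: doubleton_eq_iff)
  then have "c {a, b} \<noteq> c {a, d}" by (rule proper_D[OF P ab ad, of a]) simp_all
  then show False using z ab ad by simp
qed

theorem theorem2p5:
  fixes n :: nat
  assumes "n \<ge> 4"
  shows "px (complete_V n) (complete_E n) (n - 1) 2 = 2"
proof -
  have n: "n \<ge> 4" by (rule assms)
  define V where "V = complete_V n"
  define E where "E = complete_E n"
  have V: "V = {..<n}" unfolding V_def complete_V_def by simp
  have finE: "finite E" unfolding E_def complete_E_def
  proof (rule finite_subset[of _ "Pow {..<n}"])
    show "{{u, v} |u v. u < n \<and> v < n \<and> u \<noteq> v} \<subseteq> Pow {..<n}" by auto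
  qed simp
  define LS where "LS = (\<lambda>S. {l. \<exists>T. int_disj_S_trees V E S l T})"
  have LS2: "\<And>S. S \<subseteq> V \<Longrightarrow> card S = n - 1 \<Longrightarrow> 2 \<le> Max (LS S)"
  proof -
    fix S assume S: "S \<subseteq> V" "card S = n - 1"
    have fS: "finite S" using S V finite_subset by blast
    have "card S \<ge> 2" using S n by simp
    then have "S \<noteq> {}" by auto
    then obtain a where a: "a \<in> S" by blast
    have "card (S - {a}) \<ge> 1" using \<open>card S \<ge> 2\<close> a fS by simp
    then have "S - {a} \<noteq> {}" by (metis card.empty not_one_le_zero)
    then obtain b where b: "b \<in> S - {a}" by blast
    have ab: "a \<in> S" "b \<in> S" "a \<noteq> b" using a b by auto
    have fin: "finite (LS S)" unfolding LS_def using fin_L[OF ab finE] finite_subset by blast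
    have "2 \<in> LS S" unfolding LS_def E_def using constrS[OF n] S V by blast
    then show "2 \<le> Max (LS S)" using fin by simp
  qed
  have kap: "2 \<le> kappa V E (n - 1)"
  proof -
    define M where "M = {Max (LS S) | S. S \<subseteq> V \<and> card S = n - 1}"
    have Meq: "M = (\<lambda>S. Max (LS S)) ` {S. S \<subseteq> V \<and> card S = n - 1}" unfolding M_def by blast
    have "finite {S. S \<subseteq> V \<and> card S = n - 1}" using V by auto
    then have fM: "finite M" unfolding Meq by simp
    have "{..<n-1} \<subseteq> V" "card {..<n-1} = n - 1" using V by auto
    then have neM: "M \<noteq> {}" unfolding M_def by blast
    have "\<forall>m\<in>M. 2 \<le> m" unfolding M_def using LS2 by blast
    then have "2 \<le> Min M" using fM neM by simp
    then show ?thesis unfolding kappa_def M_def LS_def by simp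
  qed
  define P where "P = (\<lambda>m. \<exists>c :: nat set \<Rightarrow> nat. c ` E \<subseteq> {..<m} \<and>
        (\<forall>S. S \<subseteq> V \<and> card S = n - 1 \<longrightarrow>
           (\<exists>T. int_disj_S_trees V E S 2 T \<and> (\<forall>i<2. proper_tree c (snd (T i))))))"
  have P2: "P 2"
    unfolding P_def
  proof (rule exI[of _ "col n"], intro conjI allI impI)
    show "col n ` E \<subseteq> {..<2}" unfolding col_def by auto
    fix S assume hS: "S \<subseteq> V \<and> card S = n - 1"
    then have "S \<subseteq> {..<n}" "card S = n - 1" using V by auto
    from constrS[OF n this]
    show "\<exists>T. int_disj_S_trees V E S 2 T \<and> (\<forall>i<2. proper_tree (col n) (snd (T i)))"
      unfolding E_def V .
  qed
  have Pge: "2 \<le> m" if Pm: "P m" for m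
  proof (rule ccontr)
    assume "\<not> 2 \<le> m"
    with Pm obtain c :: "nat set \<Rightarrow> nat" where c: "c ` E \<subseteq> {..<m}"
      and cS: "\<forall>S. S \<subseteq> V \<and> card S = n - 1 \<longrightarrow>
           (\<exists>T. int_disj_S_trees V E S 2 T \<and> (\<forall>i<2. proper_tree c (snd (T i))))"
      unfolding P_def by blast
    have c0: "\<forall>e\<in>E. c e = 0"
    proof
      fix e assume "e \<in> E"
      then have "c e < m" using c by auto
      then show "c e = 0" using \<open>\<not> 2 \<le> m\<close> by simp
    qed
    have "{..<n-1} \<subseteq> V" "card {..<n-1} = n - 1" using V by auto
    then obtain T where T: "int_disj_S_trees V E {..<n-1} 2 T" "\<forall>i<2. proper_tree c (snd (T i))"
      using cS by blast
    have tr: "is_S_tree V E {..<n-1} (fst (T 0)) (snd (T 0))" using T(1) unfolding int_disj_S_trees_def by simp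
    have pr: "proper_tree c (snd (T 0))" using T(2) by simp
    have tr': "is_tree_in V E (fst (T 0)) (snd (T 0))" and sub: "{..<n-1} \<subseteq> fst (T 0)"
      using tr unfolding is_S_tree_def by auto
    have "snd (T 0) \<subseteq> E" using tr' unfolding is_tree_in_def by blast
    then have z: "\<forall>e\<in>snd (T 0). c e = 0" using c0 by blast
    have "0 \<in> fst (T 0)" "1 \<in> fst (T 0)" "2 \<in> fst (T 0)" using sub n by auto
    then show False using one_color_fail[OF tr' pr z, of 0 1 2] by simp
  qed
  have least: "(LEAST m. P m) = 2"
    by (rule Least_equality[of P 2, OF P2 Pge])
  have cV: "card V = n" using V by simp
  have cond: "2 \<le> n - 1 \<and> n - 1 \<le> card V \<and> 1 \<le> (2::nat) \<and> 2 \<le> kappa V E (n - 1)"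
    using n kap cV by simp
  have "px V E (n - 1) 2 = (LEAST m. P m)" unfolding px_def P_def by (rule if_P[OF cond])
  then have "px V E (n - 1) 2 = 2" using least by (rule trans)
  then show ?thesis unfolding V_def E_def .
qed

end
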